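(* Let $G$ be a finite simple graph, $P$ a pebble distribution, and $U$ a unit distribution of nonzero size on a vertex $u$, disjoint from $P$. If a vertex $v$ has cooperation excess at least $3$ and one of its neighbors is a cooperation vertex, then there is a vertex $w$ adjacent to $v$ with $M(w)\leq M(v)$.
   Context: A pebble distribution is a function $V(G)\to\mathbb{Z}_{\geq0}$; $(P+U)(v)=P(v)+U(v)$. A pebbling move removes two pebbles from a vertex and adds one to an adjacent vertex; a pebbling sequence is an executable sequence of moves, and $(P+U)_\sigma$ is the result of applying $\sigma$. A vertex $v$ is $k$-reachable under a distribution if some pebbling sequence yields at least $k$ pebbles on $v$; reachable means $1$-reachable. $\mathrm{reach}(P,v)$ is the largest such $k$; $\mathrm{exc}(P,v)=\mathrm{reach}(P,v)-1$ if $v$ is reachable, else $0$. A cooperation vertex is reachable under $P+U$ but under neither $P$ nor $U$. The cooperation excess of $v$ is $\mathrm{exc}(P+U,v)-\mathrm{exc}(P,v)-\mathrm{exc}(U,v)$. A vertex is utilized by a pebbling sequence if some move of it removes or adds a pebble at that vertex. $M(v)$ is the minimum, over pebbling sequences $\sigma$ from $P+U$ with $(P+U)_\sigma(v)\geq 2$, of the number of cooperation vertices utilized by $\sigma$ (counting $v$ if it is a cooperation vertex); $M(v)=\infty$ if $v$ is not $2$-reachable under $P+U$. *)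

theory Defs
  imports Main "HOL-Library.Extended_Nat"
begin

definition simple_graph :: "'a set \<Rightarrow> ('a \<Rightarrow> 'a \<Rightarrow> bool) \<Rightarrow> bool" where
  "simple_graph V E \<longleftrightarrow> finite V \<and> (\<forall>x y. E x y \<longrightarrow> x \<in> V \<and> y \<in> V)
     \<and> (\<forall>x y. E x y \<longrightarrow> E y x) \<and> (\<forall>x. \<not> E x x)"

definition distribution :: "'a set \<Rightarrow> ('a \<Rightarrow> nat) \<Rightarrow> bool" where
  "distribution V P \<longleftrightarrow> (\<forall>x. x \<notin> V \<longrightarrow> P x = 0)"

definition dsum :: "('a \<Rightarrow> nat) \<Rightarrow> ('a \<Rightarrow> nat) \<Rightarrow> ('a \<Rightarrow> nat)" where
  "dsum P U = (\<lambda>x. P x + U x)"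

definition pmove :: "('a \<Rightarrow> nat) \<Rightarrow> 'a \<Rightarrow> 'a \<Rightarrow> ('a \<Rightarrow> nat)" where
  "pmove P x y = (\<lambda>z. (if z = x then P z - 2 else P z) + (if z = y then 1 else 0))"

fun executable :: "('a \<Rightarrow> 'a \<Rightarrow> bool) \<Rightarrow> ('a \<Rightarrow> nat) \<Rightarrow> ('a \<times> 'a) list \<Rightarrow> bool" where
  "executable E P [] = True"
| "executable E P ((x, y) # \<sigma>) = (E x y \<and> P x \<ge> 2 \<and> executable E (pmove P x y) \<sigma>)"

fun apply_seq :: "('a \<Rightarrow> nat) \<Rightarrow> ('a \<times> 'a) list \<Rightarrow> ('a \<Rightarrow> nat)" where
  "apply_seq P [] = P"
| "apply_seq P ((x, y) # \<sigma>) = apply_seq (pmove P x y) \<sigma>"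

definition k_reachable :: "('a \<Rightarrow> 'a \<Rightarrow> bool) \<Rightarrow> ('a \<Rightarrow> nat) \<Rightarrow> nat \<Rightarrow> 'a \<Rightarrow> bool" where
  "k_reachable E P k v \<longleftrightarrow> (\<exists>\<sigma>. executable E P \<sigma> \<and> apply_seq P \<sigma> v \<ge> k)"

definition reachable :: "('a \<Rightarrow> 'a \<Rightarrow> bool) \<Rightarrow> ('a \<Rightarrow> nat) \<Rightarrow> 'a \<Rightarrow> bool" where
  "reachable E P v \<longleftrightarrow> k_reachable E P 1 v"

definition reach :: "('a \<Rightarrow> 'a \<Rightarrow> bool) \<Rightarrow> ('a \<Rightarrow> nat) \<Rightarrow> 'a \<Rightarrow> nat" where
  "reach E P v = Max {k. k_reachable E P k v}"

definition exc :: "('a \<Rightarrow> 'a \<Rightarrow> bool) \<Rightarrow> ('a \<Rightarrow> nat) \<Rightarrow> 'a \<Rightarrow> nat" where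
  "exc E P v = (if reachable E P v then reach E P v - 1 else 0)"

definition coop_vertex :: "('a \<Rightarrow> 'a \<Rightarrow> bool) \<Rightarrow> ('a \<Rightarrow> nat) \<Rightarrow> ('a \<Rightarrow> nat) \<Rightarrow> 'a \<Rightarrow> bool" where
  "coop_vertex E P U v \<longleftrightarrow> reachable E (dsum P U) v \<and> \<not> reachable E P v \<and> \<not> reachable E U v"

definition coop_excess :: "('a \<Rightarrow> 'a \<Rightarrow> bool) \<Rightarrow> ('a \<Rightarrow> nat) \<Rightarrow> ('a \<Rightarrow> nat) \<Rightarrow> 'a \<Rightarrow> int" where
  "coop_excess E P U v = int (exc E (dsum P U) v) - int (exc E P v) - int (exc E U v)"

definition utilized :: "('a \<times> 'a) list \<Rightarrow> 'a \<Rightarrow> bool" where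
  "utilized \<sigma> w \<longleftrightarrow> (\<exists>(x, y) \<in> set \<sigma>. x = w \<or> y = w)"

text \<open>M(v): minimum over executable sequences from P+U putting at least two
pebbles on v of the number of cooperation vertices utilized (v counted if it
is a cooperation vertex); infinity (INF of the empty set) if no such sequence.\<close>
definition Mcoop :: "('a \<Rightarrow> 'a \<Rightarrow> bool) \<Rightarrow> ('a \<Rightarrow> nat) \<Rightarrow> ('a \<Rightarrow> nat) \<Rightarrow> 'a \<Rightarrow> enat" where
  "Mcoop E P U v = (INF \<sigma> \<in> {\<sigma>. executable E (dsum P U) \<sigma> \<and> apply_seq (dsum P U) \<sigma> v \<ge> 2}.
      enat (card {w. coop_vertex E P U w \<and> (utilized \<sigma> w \<or> w = v)}))"

end

theory Submission
  imports Defs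
begin

lemma exec_append: "executable E P (s1 @ s2) = (executable E P s1 \<and> executable E (apply_seq P s1) s2)"
  by (induction E P s1 rule: executable.induct) auto

lemma no_in_move: "\<forall>x. (x, v) \<notin> set s \<Longrightarrow> apply_seq P s v \<le> P v"
proof (induction s arbitrary: P)
  case Nil then show ?case by simp
next
  case (Cons m s)
  obtain a b where m: "m = (a, b)" by force
  have "b \<noteq> v" using Cons.prems m by auto
  then have "pmove P a b v \<le> P v" unfolding pmove_def by auto
  moreover have "apply_seq (pmove P a b) s v \<le> pmove P a b v" using Cons by auto
  ultimately show ?case using m by simp
qed

lemma one_move_reach:
  assumes "E v y" "X v \<ge> 2" "\<not> E v v"
  shows "reachable E X y"
proof -
  have "y \<noteq> v" using assms by auto
  then have "apply_seq X [(v, y)] y \<ge> 1" by (simp add: pmove_def)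
  moreover have "executable E X [(v, y)]" using assms by simp
  ultimately show ?thesis unfolding reachable_def k_reachable_def by blast
qed

theorem claim3p6:
  fixes V :: "'a set" and E :: "'a \<Rightarrow> 'a \<Rightarrow> bool"
    and P U :: "'a \<Rightarrow> nat" and u v :: 'a and k :: nat
  assumes "simple_graph V E"
    and "distribution V P"
    and "u \<in> V" and "k > 0" and "U = (\<lambda>x. if x = u then k else 0)"
    and "\<forall>x. P x = 0 \<or> U x = 0"
    and "coop_excess E P U v \<ge> 3"
    and "\<exists>y. E v y \<and> coop_vertex E P U y"
  shows "\<exists>w. E v w \<and> Mcoop E P U w \<le> Mcoop E P U v"
proof -
  obtain y where y: "E v y" "coop_vertex E P U y" using assms(8) by blast
  have irr: "\<And>x. \<not> E x x" and sym: "\<And>x z. E x z \<Longrightarrow> E z x"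
    using assms(1) unfolding simple_graph_def by auto
  have "P v < 2" using one_move_reach[of E v y P] y irr unfolding coop_vertex_def by force
  moreover have "U v < 2" using one_move_reach[of E v y U] y irr unfolding coop_vertex_def by force
  ultimately have small: "dsum P U v < 2" using assms(6) unfolding dsum_def by (metis add_0 add_0_right)
  define S where "S = (\<lambda>t. {\<sigma>. executable E (dsum P U) \<sigma> \<and> apply_seq (dsum P U) \<sigma> t \<ge> 2})"
  define C where "C = (\<lambda>t \<sigma>. enat (card {w. coop_vertex E P U w \<and> (utilized \<sigma> w \<or> w = t)}))"
  have M: "\<And>t. Mcoop E P U t = (INF \<sigma> \<in> S t. C t \<sigma>)" unfolding Mcoop_def S_def C_def by simp
  show ?thesis
  proof (cases "S v = {}")
    case True
    then have "Mcoop E P U v = \<infinity>" using M by (simp add: top_enat_def)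
    then show ?thesis using y by auto
  next
    case False
    then have ne: "C v ` S v \<noteq> {}" by auto
    have "Inf (C v ` S v) \<in> C v ` S v"
      unfolding Inf_enat_def using ne by (simp add: LeastI_ex del: image_is_empty) (metis LeastI_ex ex_in_conv ne)
    then obtain \<sigma> where sig: "\<sigma> \<in> S v" and Mv: "Mcoop E P U v = C v \<sigma>" using M by auto
    have "\<exists>x. (x, v) \<in> set \<sigma>"
    proof (rule ccontr)
      assume "\<not> ?thesis"
      then have "apply_seq (dsum P U) \<sigma> v \<le> dsum P U v" using no_in_move[of v \<sigma> "dsum P U"] by blast
      then show False using sig small unfolding S_def by auto
    qed
    then obtain w where wv: "(w, v) \<in> set \<sigma>" by blast
    then obtain s1 s2 where sp: "\<sigma> = s1 @ (w, v) # s2" by (metis split_list)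
    have ex: "executable E (dsum P U) s1" "E w v" "apply_seq (dsum P U) s1 w \<ge> 2"
      using sig sp unfolding S_def by (auto simp: exec_append)
    have s1S: "s1 \<in> S w" using ex unfolding S_def by auto
    have fin: "finite {x. coop_vertex E P U x \<and> (utilized \<sigma> x \<or> x = v)}"
    proof (rule finite_subset)
      show "{x. coop_vertex E P U x \<and> (utilized \<sigma> x \<or> x = v)} \<subseteq> insert v (fst ` set \<sigma> \<union> snd ` set \<sigma>)"
        unfolding utilized_def by force
    qed auto
    have sub: "{x. coop_vertex E P U x \<and> (utilized s1 x \<or> x = w)} \<subseteq> {x. coop_vertex E P U x \<and> (utilized \<sigma> x \<or> x = v)}"
      using sp wv unfolding utilized_def by auto
    have "Mcoop E P U w \<le> C w s1" using M s1S by (simp add: INF_lower)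
    also have "\<dots> \<le> C v \<sigma>" unfolding C_def using card_mono[OF fin sub] by simp
    finally show ?thesis using Mv sym[OF ex(2)] by auto
  qed
qed

end
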